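(* Let $\Gamma$ be a splice diagram satisfying the edge determinant condition, and let $v$ be a node of $\Gamma$ with adjacent vertices $u_1,\dots,u_{\delta_v}$. Then (1) the vectors $\rho(u_1),\dots,\rho(u_{\delta_v})$ are linearly independent in $\mathbb{R}^n$; (2) $\rho(v)$ lies in the relative interior of the convex hull of $\{\rho(u_1),\dots,\rho(u_{\delta_v})\}$.
   Context: A splice diagram is a finite tree $\Gamma$ with at least one vertex of valency $\geq3$ and no vertex of valency $2$; vertices of valency $1$ are leaves, others nodes; $\delta_v$ is the valency of $v$. For each node $v$ and edge $e$ at $v$ a positive integer weight $d_{v,e}$ is given; $d_v=\prod_{e\ni v}d_{v,e}$; $d_{v,u}$ is the weight at $v$ of the edge toward $u$. For distinct vertices $u,v$, $\ell_{u,v}$ is the product of all $d_{w,e}$ with $w$ a node on the geodesic $[u,v]$ and $e$ an edge at $w$ not in $[u,v]$. Edge determinant condition: $d_{u,v}d_{v,u}>\ell_{u,v}$ for every edge $[u,v]$ between nodes. With $n$ leaves, $w_\lambda$ is the standard basis vector of $\mathbb{R}^n$ of leaf $\lambda$, $w_u=\sum_\lambda\ell_{u,\lambda}w_\lambda$ for a node $u$, and $\rho(u)=w_u/|w_u|$ ($1$-norm) for every vertex $u$. *)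

theory Defs
  imports "HOL-Analysis.Analysis"
begin

definition nbrs :: "('a \<Rightarrow> 'a \<Rightarrow> bool) \<Rightarrow> 'a \<Rightarrow> 'a set" where
  "nbrs adj v = {u. adj v u}"

definition valency :: "('a \<Rightarrow> 'a \<Rightarrow> bool) \<Rightarrow> 'a \<Rightarrow> nat" where
  "valency adj v = card (nbrs adj v)"

definition is_leaf :: "'a set \<Rightarrow> ('a \<Rightarrow> 'a \<Rightarrow> bool) \<Rightarrow> 'a \<Rightarrow> bool" where
  "is_leaf V adj v \<longleftrightarrow> v \<in> V \<and> valency adj v = 1"

definition is_node :: "'a set \<Rightarrow> ('a \<Rightarrow> 'a \<Rightarrow> bool) \<Rightarrow> 'a \<Rightarrow> bool" where
  "is_node V adj v \<longleftrightarrow> v \<in> V \<and> valency adj v \<noteq> 1"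

definition is_path :: "('a \<Rightarrow> 'a \<Rightarrow> bool) \<Rightarrow> 'a list \<Rightarrow> 'a \<Rightarrow> 'a \<Rightarrow> bool" where
  "is_path adj p u v \<longleftrightarrow> p \<noteq> [] \<and> hd p = u \<and> last p = v \<and> distinct p \<and> successively adj p"

definition is_tree :: "'a set \<Rightarrow> ('a \<Rightarrow> 'a \<Rightarrow> bool) \<Rightarrow> bool" where
  "is_tree V adj \<longleftrightarrow> finite V \<and> V \<noteq> {} \<and>
     (\<forall>u v. adj u v \<longrightarrow> u \<in> V \<and> v \<in> V) \<and>
     (\<forall>u v. adj u v \<longrightarrow> adj v u) \<and> (\<forall>u. \<not> adj u u) \<and>
     (\<forall>u\<in>V. \<forall>v\<in>V. \<exists>!p. is_path adj p u v)"

definition geod :: "('a \<Rightarrow> 'a \<Rightarrow> bool) \<Rightarrow> 'a \<Rightarrow> 'a \<Rightarrow> 'a list" where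
  "geod adj u v = (THE p. is_path adj p u v)"

text \<open>d w x: the weight at the node w of the edge {w,x}.\<close>
definition splice_diagram :: "'a set \<Rightarrow> ('a \<Rightarrow> 'a \<Rightarrow> bool) \<Rightarrow> ('a \<Rightarrow> 'a \<Rightarrow> nat) \<Rightarrow> bool" where
  "splice_diagram V adj d \<longleftrightarrow> is_tree V adj \<and>
     (\<exists>v\<in>V. valency adj v \<ge> 3) \<and> (\<forall>v\<in>V. valency adj v \<noteq> 2) \<and>
     (\<forall>w x. is_node V adj w \<and> adj w x \<longrightarrow> d w x > 0)"

definition ell :: "'a set \<Rightarrow> ('a \<Rightarrow> 'a \<Rightarrow> bool) \<Rightarrow> ('a \<Rightarrow> 'a \<Rightarrow> nat) \<Rightarrow> 'a \<Rightarrow> 'a \<Rightarrow> nat" where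
  "ell V adj d u v =
     (\<Prod>w\<in>{w \<in> set (geod adj u v). is_node V adj w}.
        \<Prod>x\<in>{x. adj w x \<and> x \<notin> set (geod adj u v)}. d w x)"

definition edge_determinant_condition ::
  "'a set \<Rightarrow> ('a \<Rightarrow> 'a \<Rightarrow> bool) \<Rightarrow> ('a \<Rightarrow> 'a \<Rightarrow> nat) \<Rightarrow> bool" where
  "edge_determinant_condition V adj d \<longleftrightarrow>
     (\<forall>u v. adj u v \<and> is_node V adj u \<and> is_node V adj v \<longrightarrow>
        d u v * d v u > ell V adj d u v)"

text \<open>Vectors live in real^'a; only leaf coordinates are used (the standard basis
  vectors of the leaves span a copy of R^n).\<close>
definition wvec :: "'a set \<Rightarrow> ('a \<Rightarrow> 'a \<Rightarrow> bool) \<Rightarrow> ('a \<Rightarrow> 'a \<Rightarrow> nat) \<Rightarrow> 'a \<Rightarrow> real ^ ('a::finite)" where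
  "wvec V adj d u = (\<chi> l. if is_leaf V adj l then
       (if is_leaf V adj u then (if l = u then 1 else 0) else real (ell V adj d u l))
     else 0)"

definition norm1 :: "real ^ ('a::finite) \<Rightarrow> real" where
  "norm1 x = (\<Sum>i\<in>UNIV. \<bar>x $ i\<bar>)"

definition rho :: "'a set \<Rightarrow> ('a \<Rightarrow> 'a \<Rightarrow> bool) \<Rightarrow> ('a \<Rightarrow> 'a \<Rightarrow> nat) \<Rightarrow> 'a \<Rightarrow> real ^ ('a::finite)" where
  "rho V adj d u = inverse (norm1 (wvec V adj d u)) *\<^sub>R wvec V adj d u"

end

theory Submission
  imports Defs
begin


lemma comb_component:
  fixes f :: "'b \<Rightarrow> real ^ ('a::finite)"
  assumes fin: "finite N"
    and f: "\<And>u l. u \<in> N \<Longrightarrow> f u $ l = (if L l then (if c l = u then al u else be u) * e l else 0)"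
    and cN: "\<And>l. L l \<Longrightarrow> c l \<in> N"
  shows "(\<Sum>u\<in>N. x u *\<^sub>R f u) $ l =
     (if L l then (x (c l) * (al (c l) - be (c l)) + (\<Sum>u\<in>N. x u * be u)) * e l else 0)"
proof (cases "L l")
  case True
  have "(\<Sum>u\<in>N. x u *\<^sub>R f u) $ l = (\<Sum>u\<in>N. x u * be u * e l + (if c l = u then x u * (al u - be u) * e l else 0))"
    unfolding sum_component by (rule sum.cong) (auto simp: f True algebra_simps)
  also have "\<dots> = (\<Sum>u\<in>N. x u * be u) * e l + x (c l) * (al (c l) - be (c l)) * e l"
    using fin cN[OF True] by (simp add: sum.distrib sum_distrib_right)
  finally show ?thesis using True by (simp add: algebra_simps)
next
  case False
  then show ?thesis by (simp add: f)
qed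

lemma comb_zero:
  fixes f :: "'b \<Rightarrow> real ^ ('a::finite)"
  assumes fin: "finite N"
    and f: "\<And>u l. u \<in> N \<Longrightarrow> f u $ l = (if L l then (if c l = u then al u else be u) * e l else 0)"
    and cN: "\<And>l. L l \<Longrightarrow> c l \<in> N"
    and br: "\<And>u. u \<in> N \<Longrightarrow> \<exists>l. L l \<and> c l = u"
    and e: "\<And>l. e l > 0"
    and ab: "\<And>u. u \<in> N \<Longrightarrow> be u \<ge> 0 \<and> al u > be u"
    and z: "(\<Sum>u\<in>N. x u *\<^sub>R f u) = 0"
  shows "\<forall>u\<in>N. x u = 0"
proof -
  define s where "s = (\<Sum>u\<in>N. x u * be u)"
  have xu: "x u = - s / (al u - be u)" if uN: "u \<in> N" for u
  proof -
    obtain l where l: "L l" "c l = u" using br[OF uN] by blast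
    have "(\<Sum>u\<in>N. x u *\<^sub>R f u) $ l = 0" using z by simp
    then have "(x u * (al u - be u) + s) * e l = 0"
      using comb_component[OF fin f cN, of x l] l by (simp add: s_def)
    then have "x u * (al u - be u) + s = 0" using e[of l] by simp
    moreover have "al u - be u > 0" using ab[OF uN] by simp
    ultimately show ?thesis by (simp add: field_simps)
  qed
  have "s = (\<Sum>u\<in>N. x u * be u)" by (simp add: s_def)
  also have "\<dots> = (\<Sum>u\<in>N. (- s / (al u - be u)) * be u)"
    by (rule sum.cong) (auto simp: xu)
  also have "\<dots> = - s * (\<Sum>u\<in>N. be u / (al u - be u))"
    by (simp add: sum_distrib_left)
  finally have "s * (1 + (\<Sum>u\<in>N. be u / (al u - be u))) = 0" by (simp add: algebra_simps)
  moreover have "(\<Sum>u\<in>N. be u / (al u - be u)) \<ge> 0"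
  proof (rule sum_nonneg)
    fix u assume "u \<in> N" then show "0 \<le> be u / (al u - be u)" using ab[of u] by simp
  qed
  ultimately have "s = 0" by simp
  then show ?thesis using xu by simp
qed

lemma LA_main:
  fixes f :: "'b \<Rightarrow> real ^ ('a::finite)"
  assumes fin: "finite N" and ne: "N \<noteq> {}"
    and f: "\<And>u l. u \<in> N \<Longrightarrow> f u $ l = (if L l then (if c l = u then al u else be u) * e l else 0)"
    and W: "\<And>l. W $ l = (if L l then e l else 0)"
    and cN: "\<And>l. L l \<Longrightarrow> c l \<in> N"
    and br: "\<And>u. u \<in> N \<Longrightarrow> \<exists>l. L l \<and> c l = u"
    and e: "\<And>l. e l > 0"
    and ab: "\<And>u. u \<in> N \<Longrightarrow> be u \<ge> 0 \<and> al u > be u"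
    and h: "\<And>u. h u = inverse (norm1 (f u)) *\<^sub>R f u"
    and hv: "hv = inverse (norm1 W) *\<^sub>R W"
  shows "inj_on h N \<and> independent (h ` N) \<and> hv \<in> rel_interior (convex hull (h ` N))"
proof -
  have fnn: "f u $ l \<ge> 0" if "u \<in> N" for u l
    using ab[OF that] e[of l] by (simp add: f[OF that])
  have npos: "norm1 (f u) > 0" if uN: "u \<in> N" for u
  proof -
    obtain l where l: "L l" "c l = u" using br[OF uN] by blast
    have "f u $ l > 0" using ab[OF uN] e[of l] l by (simp add: f[OF uN])
    also have "f u $ l \<le> norm1 (f u)" unfolding norm1_def
      using member_le_sum[of l UNIV "\<lambda>i. \<bar>f u $ i\<bar>"] by simp
    finally show ?thesis .
  qed
  have hz: "\<forall>u\<in>N. x u = 0" if z: "(\<Sum>u\<in>N. x u *\<^sub>R h u) = 0" for x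
  proof -
    have "(\<Sum>u\<in>N. (x u * inverse (norm1 (f u))) *\<^sub>R f u) = 0"
      using z by (simp add: h)
    then have "\<forall>u\<in>N. x u * inverse (norm1 (f u)) = 0"
      using comb_zero[OF fin f cN br e ab, of "\<lambda>u. x u * inverse (norm1 (f u))"] by simp
    then show ?thesis using npos by fastforce
  qed
  have inj: "inj_on h N"
  proof (rule inj_onI, rule ccontr)
    fix u u' assume uN: "u \<in> N" and uN': "u' \<in> N" and eq: "h u = h u'" and ne: "u \<noteq> u'"
    define x where "x = (\<lambda>w. if w = u then 1 else if w = u' then -1 else (0::real))"
    have "(\<Sum>w\<in>N. x w *\<^sub>R h w) = (\<Sum>w\<in>N. (if w = u then h u else 0) - (if w = u' then h u' else 0))"
      by (rule sum.cong) (use ne in \<open>auto simp: x_def\<close>)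
    also have "\<dots> = 0" using uN uN' fin eq by (simp add: sum_subtractf)
    finally have "\<forall>w\<in>N. x w = 0" by (rule hz)
    then have "x u = 0" using uN by blast
    then show False by (simp add: x_def)
  qed
  have indep: "independent (h ` N)"
  proof
    assume "dependent (h ` N)"
    then obtain y where y: "\<exists>v\<in>h ` N. y v \<noteq> 0" "(\<Sum>v\<in>h ` N. y v *\<^sub>R v) = 0"
      using fin by (auto simp: dependent_finite)
    have "(\<Sum>u\<in>N. y (h u) *\<^sub>R h u) = 0" using y(2) by (simp add: sum.reindex[OF inj])
    then have "\<forall>u\<in>N. y (h u) = 0" by (rule hz)
    then show False using y(1) by auto
  qed
  define S where "S = (\<Sum>u\<in>N. be u / (al u - be u))"
  have S0: "S \<ge> 0" unfolding S_def
  proof (rule sum_nonneg)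
    fix u assume "u \<in> N" then show "0 \<le> be u / (al u - be u)" using ab[of u] by simp
  qed
  define t where "t = inverse (1 + S)"
  define y where "y = (\<lambda>u. t / (al u - be u))"
  have ypos: "y u > 0" if "u \<in> N" for u using ab[OF that] S0 by (simp add: y_def t_def)
  have SW: "(\<Sum>u\<in>N. y u *\<^sub>R f u) = W"
  unfolding vec_eq_iff
  proof
    fix l
    show "(\<Sum>u\<in>N. y u *\<^sub>R f u) $ l = W $ l"
    proof (cases "L l")
      case True
      have c1: "y (c l) * (al (c l) - be (c l)) = t" using ab[OF cN[OF True]] by (simp add: y_def)
      have c2: "(\<Sum>u\<in>N. y u * be u) = t * S" unfolding S_def sum_distrib_left
        by (rule sum.cong) (auto simp: y_def)
      have "t + t * S = 1" using S0 by (simp add: t_def field_simps)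
      then show ?thesis using True c1 c2 comb_component[OF fin f cN, of y l] by (simp add: W)
    next
      case False
      then show ?thesis using comb_component[OF fin f cN, of y l] by (simp add: W)
    qed
  qed
  have nW: "norm1 W = (\<Sum>u\<in>N. y u * norm1 (f u))"
  proof -
    have "norm1 W = (\<Sum>i\<in>UNIV. (\<Sum>u\<in>N. y u * f u $ i))"
      unfolding norm1_def SW[symmetric] sum_component
    proof (rule sum.cong)
      fix i
      have "(\<Sum>u\<in>N. y u * f u $ i) \<ge> 0" by (rule sum_nonneg) (metis fnn ypos less_eq_real_def mult_nonneg_nonneg)
      then show "\<bar>\<Sum>u\<in>N. (y u *\<^sub>R f u) $ i\<bar> = (\<Sum>u\<in>N. y u * f u $ i)" by simp
    qed simp
    also have "\<dots> = (\<Sum>u\<in>N. y u * (\<Sum>i\<in>UNIV. f u $ i))"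
      by (subst sum.swap) (simp add: sum_distrib_left)
    also have "\<dots> = (\<Sum>u\<in>N. y u * norm1 (f u))"
      unfolding norm1_def by (rule sum.cong) (use fnn in auto)
    finally show ?thesis .
  qed
  have nWpos: "norm1 W > 0" unfolding nW
    by (rule sum_pos[OF fin ne]) (use ypos npos in auto)
  define z where "z = (\<lambda>u. y u * norm1 (f u) / norm1 W)"
  define U where "U = (\<lambda>x. z (the_inv_into N h x))"
  have Uh: "U (h u) = z u" if "u \<in> N" for u
    using that inj by (simp add: U_def the_inv_into_f_f)
  have "\<not> affine_dependent (h ` N)" using indep affine_dependent_imp_dependent by blast
  moreover have "\<forall>x\<in>h ` N. 0 < U x" using Uh ypos npos nWpos by (auto simp: z_def)
  moreover have "sum U (h ` N) = 1"
  proof -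
    have "sum U (h ` N) = (\<Sum>u\<in>N. z u)" using Uh by (simp add: sum.reindex[OF inj])
    also have "\<dots> = (\<Sum>u\<in>N. y u * norm1 (f u)) / norm1 W" by (simp add: z_def sum_divide_distrib)
    finally show ?thesis using nW nWpos by simp
  qed
  moreover have "(\<Sum>x\<in>h ` N. U x *\<^sub>R x) = hv"
  proof -
    have "(\<Sum>x\<in>h ` N. U x *\<^sub>R x) = (\<Sum>u\<in>N. z u *\<^sub>R h u)" using Uh by (simp add: sum.reindex[OF inj])
    also have "\<dots> = (\<Sum>u\<in>N. inverse (norm1 W) *\<^sub>R (y u *\<^sub>R f u))"
    proof (rule sum.cong)
      fix u assume "u \<in> N"
      then have "norm1 (f u) > 0" by (rule npos)
      then show "z u *\<^sub>R h u = inverse (norm1 W) *\<^sub>R (y u *\<^sub>R f u)"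
        by (simp add: z_def h field_simps)
    qed simp
    also have "\<dots> = inverse (norm1 W) *\<^sub>R (\<Sum>u\<in>N. y u *\<^sub>R f u)"
      by (rule scaleR_sum_right[symmetric])
    also have "\<dots> = hv" by (simp only: SW hv)
    finally show ?thesis .
  qed
  ultimately have "hv \<in> rel_interior (convex hull (h ` N))"
    by (auto simp: rel_interior_convex_hull_explicit)
  with inj indep show ?thesis by blast
qed



definition FF :: "'a set \<Rightarrow> ('a \<Rightarrow> 'a \<Rightarrow> bool) \<Rightarrow> ('a \<Rightarrow> 'a \<Rightarrow> nat) \<Rightarrow> 'a set \<Rightarrow> nat" where
  "FF V adj d P = (\<Prod>w\<in>{w \<in> P. is_node V adj w}. \<Prod>x\<in>{x. adj w x \<and> x \<notin> P}. d w x)"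

lemma ell_FF: "ell V adj d u v = FF V adj d (set (geod adj u v))"
  unfolding ell_def FF_def by simp

lemma tree_adjV: "is_tree V adj \<Longrightarrow> adj u w \<Longrightarrow> u \<in> V \<and> w \<in> V"
  unfolding is_tree_def by blast
lemma tree_sym: "is_tree V adj \<Longrightarrow> adj u w \<Longrightarrow> adj w u"
  unfolding is_tree_def by blast
lemma tree_irr: "is_tree V adj \<Longrightarrow> \<not> adj u u"
  unfolding is_tree_def by blast

lemma tree_ex1: "is_tree V adj \<Longrightarrow> u \<in> V \<Longrightarrow> w \<in> V \<Longrightarrow> \<exists>!p. is_path adj p u w"
  unfolding is_tree_def by blast

lemma geod_path: "is_tree V adj \<Longrightarrow> u \<in> V \<Longrightarrow> w \<in> V \<Longrightarrow> is_path adj (geod adj u w) u w"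
  unfolding geod_def by (rule theI', rule tree_ex1)

lemma geod_eq: "is_tree V adj \<Longrightarrow> u \<in> V \<Longrightarrow> w \<in> V \<Longrightarrow> is_path adj p u w \<Longrightarrow> geod adj u w = p"
  unfolding geod_def by (rule the1_equality, rule tree_ex1)

lemma path_tl: "is_path adj (a # p) a l \<Longrightarrow> p \<noteq> [] \<Longrightarrow> is_path adj p (hd p) l \<and> adj a (hd p) \<and> a \<notin> set p"
  unfolding is_path_def by (auto simp: successively_Cons)

lemma path_cons: "adj a (hd p) \<Longrightarrow> a \<notin> set p \<Longrightarrow> is_path adj p b l \<Longrightarrow> is_path adj (a # p) a l"
  unfolding is_path_def by (auto simp: successively_Cons)

lemma successively_dropI: "successively P xs \<Longrightarrow> successively P (drop k xs)"
  by (metis append_take_drop_id successively_append_iff)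

lemma path_drop: "is_path adj p a l \<Longrightarrow> k < length p \<Longrightarrow> is_path adj (drop k p) (p ! k) l"
  unfolding is_path_def
  by (auto simp: successively_dropI hd_drop_conv_nth last_drop distinct_drop)

lemma path_L:
  assumes T: "is_tree V adj" and aV: "a \<in> V" and lV: "l \<in> V"
    and P: "is_path adj (a # p) a l" and w: "w \<in> set p" and aw: "adj a w"
  shows "w = hd p"
proof -
  have pne: "p \<noteq> []" using w by auto
  obtain k where k: "k < length p" "p ! k = w" using w by (auto simp: in_set_conv_nth)
  have pt: "is_path adj p (hd p) l" "a \<notin> set p" using path_tl[OF P pne] by auto
  have dk: "is_path adj (drop k p) w l" using path_drop[OF pt(1) k(1)] k(2) by simp
  have hdk: "hd (drop k p) = w" using dk unfolding is_path_def by simp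
  have "a \<notin> set (drop k p)" using pt(2) set_drop_subset by fastforce
  then have "is_path adj (a # drop k p) a l" using path_cons[OF _ _ dk] aw hdk by simp
  then have "geod adj a l = a # drop k p" by (rule geod_eq[OF T aV lV])
  moreover have "geod adj a l = a # p" by (rule geod_eq[OF T aV lV P])
  ultimately have "drop k p = p" by simp
  then have "length p - k = length p" by (metis length_drop)
  then have "k = 0" using k(1) by simp
  then show ?thesis using k pne by (simp add: hd_conv_nth)
qed


lemma FF_insert:
  fixes P :: "('a::finite) set"
  assumes T: "is_tree V adj" and aP: "a \<notin> P" and bP: "b \<in> P"
    and ab: "{w \<in> P. adj a w} = {b}"
  shows "(if is_node V adj b then d b a else 1) * FF V adj d (insert a P) =
    (if is_node V adj a then (\<Prod>x\<in>{x. adj a x \<and> x \<noteq> b}. d a x) else 1) * FF V adj d P"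
proof -
  define G where "G = (\<lambda>w. \<Prod>x\<in>{x. adj w x \<and> x \<notin> P}. d w x)"
  define G' where "G' = (\<lambda>w. \<Prod>x\<in>{x. adj w x \<and> x \<notin> insert a P}. d w x)"
  have Ga: "G' a = (\<Prod>x\<in>{x. adj a x \<and> x \<noteq> b}. d a x)"
  proof -
    have "{x. adj a x \<and> x \<notin> insert a P} = {x. adj a x \<and> x \<noteq> b}"
      using ab tree_irr[OF T] bP by blast
    then show ?thesis by (simp add: G'_def)
  qed
  have Gw: "G' w = G w" if "w \<in> P" "w \<noteq> b" for w
  proof -
    have "{x. adj w x \<and> x \<notin> insert a P} = {x. adj w x \<and> x \<notin> P}"
      using ab that tree_sym[OF T] by blast
    then show ?thesis by (simp add: G'_def G_def)
  qed
  have Gb: "G b = d b a * G' b"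
  proof -
    have "{x. adj b x \<and> x \<notin> P} = insert a {x. adj b x \<and> x \<notin> insert a P}"
      using ab aP tree_sym[OF T] by blast
    then show ?thesis by (simp add: G'_def G_def)
  qed
  have split1: "FF V adj d (insert a P) = (if is_node V adj a then G' a else 1) * (\<Prod>w\<in>{w \<in> P. is_node V adj w}. G' w)"
  proof -
    have e: "FF V adj d (insert a P) = (\<Prod>w\<in>{w \<in> insert a P. is_node V adj w}. G' w)"
      unfolding FF_def G'_def ..
    show ?thesis
    proof (cases "is_node V adj a")
      case True
      then have "{w \<in> insert a P. is_node V adj w} = insert a {w \<in> P. is_node V adj w}" by auto
      then show ?thesis using True aP e by simp
    next
      case False
      then have "{w \<in> insert a P. is_node V adj w} = {w \<in> P. is_node V adj w}" by auto
      then show ?thesis using False e by simp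
    qed
  qed
  have split2: "(if is_node V adj b then d b a else 1) * (\<Prod>w\<in>{w \<in> P. is_node V adj w}. G' w) = (\<Prod>w\<in>{w \<in> P. is_node V adj w}. G w)"
  proof (cases "is_node V adj b")
    case True
    have "(\<Prod>w\<in>{w \<in> P. is_node V adj w}. G' w) = G' b * (\<Prod>w\<in>{w \<in> P. is_node V adj w} - {b}. G' w)"
      using True bP by (simp add: prod.remove)
    moreover have "(\<Prod>w\<in>{w \<in> P. is_node V adj w}. G w) = G b * (\<Prod>w\<in>{w \<in> P. is_node V adj w} - {b}. G w)"
      using True bP by (simp add: prod.remove)
    moreover have "(\<Prod>w\<in>{w \<in> P. is_node V adj w} - {b}. G' w) = (\<Prod>w\<in>{w \<in> P. is_node V adj w} - {b}. G w)"
      by (rule prod.cong) (auto simp: Gw)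
    ultimately show ?thesis using True Gb by simp
  next
    case False
    then show ?thesis by (auto intro!: prod.cong Gw)
  qed
  have FP: "FF V adj d P = (\<Prod>w\<in>{w \<in> P. is_node V adj w}. G w)"
    unfolding FF_def G_def ..
  show ?thesis
    unfolding split1 FP split2[symmetric] by (simp add: Ga)
qed



lemma branch_a:
  assumes T: "is_tree V adj" and vV: "v \<in> V" and lV: "l \<in> V" and lv: "l \<noteq> v"
  shows "adj v (hd (tl (geod adj v l))) \<and> geod adj v l = v # geod adj (hd (tl (geod adj v l))) l"
proof -
  define p where "p = geod adj v l"
  have pp: "is_path adj p v l" unfolding p_def by (rule geod_path[OF T vV lV])
  then have p: "p = v # tl p" unfolding is_path_def by (metis list.collapse)
  have qne: "tl p \<noteq> []"
  proof
    assume "tl p = []" then have "p = [v]" using p by simp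
    then show False using pp lv unfolding is_path_def by simp
  qed
  have "is_path adj (v # tl p) v l" using pp p by simp
  from path_tl[OF this qne] have q: "is_path adj (tl p) (hd (tl p)) l" "adj v (hd (tl p))" by auto
  have "hd (tl p) \<in> V" using tree_adjV[OF T q(2)] by simp
  then have "geod adj (hd (tl p)) l = tl p" by (rule geod_eq[OF T _ lV q(1)])
  then show ?thesis using q(2) p unfolding p_def by simp
qed

lemma branch_in:
  fixes V :: "('a::finite) set"
  assumes T: "is_tree V adj" and vV: "v \<in> V" and lV: "l \<in> V" and lv: "l \<noteq> v"
    and u: "u = hd (tl (geod adj v l))"
  shows "(if is_node V adj u then d u v else 1) * ell V adj d v l =
    (if is_node V adj v then (\<Prod>x\<in>{x. adj v x \<and> x \<noteq> u}. d v x) else 1) * ell V adj d u l"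
proof -
  have br: "adj v u" "geod adj v l = v # geod adj u l" using branch_a[OF T vV lV lv] u by auto
  have uV: "u \<in> V" using tree_adjV[OF T br(1)] by simp
  define P where "P = set (geod adj u l)"
  have pp: "is_path adj (v # geod adj u l) v l" using geod_path[OF T vV lV] br(2) by simp
  have gu: "is_path adj (geod adj u l) u l" by (rule geod_path[OF T uV lV])
  have vP: "v \<notin> P" using pp unfolding is_path_def P_def by simp
  have uP: "u \<in> P" using gu unfolding is_path_def P_def by (metis list.set_sel(1))
  have hdu: "hd (geod adj u l) = u" using gu unfolding is_path_def by simp
  have ab: "{w \<in> P. adj v w} = {u}"
    using path_L[OF T vV lV pp] hdu uP br(1) unfolding P_def by auto
  have "set (geod adj v l) = insert v P" using br(2) P_def by simp
  then show ?thesis using FF_insert[OF T vP uP ab, of d] unfolding ell_FF P_def by simp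
qed

lemma branch_out:
  fixes V :: "('a::finite) set"
  assumes T: "is_tree V adj" and vV: "v \<in> V" and lV: "l \<in> V" and lv: "l \<noteq> v"
    and uv: "adj v u" and u: "u \<noteq> hd (tl (geod adj v l))"
  shows "u \<notin> set (geod adj v l)" "geod adj u l = u # geod adj v l"
    "(if is_node V adj v then d v u else 1) * ell V adj d u l =
    (if is_node V adj u then (\<Prod>x\<in>{x. adj u x \<and> x \<noteq> v}. d u x) else 1) * ell V adj d v l"
proof -
  define c where "c = hd (tl (geod adj v l))"
  have br: "adj v c" "geod adj v l = v # geod adj c l" using branch_a[OF T vV lV lv] c_def by auto
  have uV: "u \<in> V" using tree_adjV[OF T uv] by simp
  have pp: "is_path adj (v # geod adj c l) v l" using geod_path[OF T vV lV] br(2) by simp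
  have gc: "is_path adj (geod adj c l) c l" using geod_path[OF T _ lV] tree_adjV[OF T br(1)] by simp
  have hdc: "hd (geod adj c l) = c" using gc unfolding is_path_def by simp
  show un: "u \<notin> set (geod adj v l)"
  proof
    assume "u \<in> set (geod adj v l)"
    moreover have "u \<noteq> v" using uv tree_irr[OF T] by auto
    ultimately have "u \<in> set (geod adj c l)" using br(2) by simp
    then have "u = c" using path_L[OF T vV lV pp _ uv] hdc by simp
    then show False using u c_def by simp
  qed
  have gv: "is_path adj (geod adj v l) v l" by (rule geod_path[OF T vV lV])
  have hdv: "hd (geod adj v l) = v" using gv unfolding is_path_def by simp
  have pu: "is_path adj (u # geod adj v l) u l"
    by (rule path_cons[OF _ un gv]) (simp add: hdv tree_sym[OF T uv])
  show gu: "geod adj u l = u # geod adj v l" by (rule geod_eq[OF T uV lV pu])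
  define P where "P = set (geod adj v l)"
  have vP: "v \<in> P" using gv unfolding is_path_def P_def by (metis list.set_sel(1))
  have ab: "{w \<in> P. adj u w} = {v}"
    using path_L[OF T uV lV pu] hdv vP tree_sym[OF T uv] unfolding P_def by auto
  have uP: "u \<notin> P" using un P_def by simp
  have "set (geod adj u l) = insert u P" using gu P_def by simp
  then show "(if is_node V adj v then d v u else 1) * ell V adj d u l =
    (if is_node V adj u then (\<Prod>x\<in>{x. adj u x \<and> x \<noteq> v}. d u x) else 1) * ell V adj d v l"
    using FF_insert[OF T uP vP ab, of d] unfolding ell_FF P_def by simp
qed



lemma leaf_branch:
  assumes T: "is_tree V adj" and vV: "v \<in> V" and lV: "l \<in> V" and lv: "l \<noteq> v"
    and ul: "is_leaf V adj u" and u: "u = hd (tl (geod adj v l))"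
  shows "l = u"
proof -
  have br: "adj v u" "geod adj v l = v # geod adj u l" using branch_a[OF T vV lV lv] u by auto
  have uV: "u \<in> V" using tree_adjV[OF T br(1)] by simp
  have pp: "is_path adj (v # geod adj u l) v l" using geod_path[OF T vV lV] br(2) by simp
  have vn: "v \<notin> set (geod adj u l)" using pp unfolding is_path_def by simp
  have gu: "is_path adj (geod adj u l) u l" by (rule geod_path[OF T uV lV])
  have g: "geod adj u l = u # tl (geod adj u l)" using gu unfolding is_path_def by (metis list.collapse)
  have nb: "nbrs adj u = {v}"
  proof -
    have "card (nbrs adj u) = 1" using ul unfolding is_leaf_def valency_def by simp
    then obtain x where x: "nbrs adj u = {x}" by (rule card_1_singletonE)
    moreover have "v \<in> nbrs adj u" using tree_sym[OF T br(1)] by (simp add: nbrs_def)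
    ultimately show ?thesis by simp
  qed
  have "tl (geod adj u l) = []"
  proof (rule ccontr)
    assume ne: "tl (geod adj u l) \<noteq> []"
    have "is_path adj (u # tl (geod adj u l)) u l" using gu g by simp
    from path_tl[OF this ne] have "adj u (hd (tl (geod adj u l)))" by simp
    then have "hd (tl (geod adj u l)) = v" using nb by (auto simp: nbrs_def)
    moreover have "hd (tl (geod adj u l)) \<in> set (geod adj u l)" using ne
      by (metis g list.set_sel(1) list.set_intros(2))
    ultimately show False using vn by simp
  qed
  then have "geod adj u l = [u]" using g by simp
  then show ?thesis using gu unfolding is_path_def by simp
qed

lemma ell_self_nonnode:
  assumes T: "is_tree V adj" and uV: "u \<in> V" and un: "\<not> is_node V adj u"
  shows "ell V adj d u u = 1"
proof -
  have "is_path adj [u] u u" unfolding is_path_def by simp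
  then have "geod adj u u = [u]" by (rule geod_eq[OF T uV uV])
  then have e: "{w \<in> set (geod adj u u). is_node V adj w} = {}" using un by auto
  show ?thesis by (simp only: ell_FF FF_def e prod.empty)
qed

lemma leaf_exists:
  fixes V :: "('a::finite) set"
  assumes T: "is_tree V adj" and vV: "v \<in> V" and uv: "adj v u"
  shows "\<exists>l. is_leaf V adj l \<and> l \<noteq> v \<and> hd (tl (geod adj v l)) = u"
proof -
  define pp where "pp = (\<lambda>q. distinct (v # u # q) \<and> successively adj (v # u # q))"
  have p0: "pp []" unfolding pp_def using uv tree_irr[OF T, of v] by auto
  have bnd: "\<forall>q. pp q \<longrightarrow> length q < CARD('a)"
  proof (intro allI impI)
    fix q assume "pp q"
    then have "distinct (v # u # q)" unfolding pp_def by simp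
    then have "card (set (v # u # q)) = length (v # u # q)" by (rule distinct_card)
    moreover have "card (set (v # u # q)) \<le> CARD('a)" by (rule card_mono) auto
    ultimately show "length q < CARD('a)" by simp
  qed
  obtain q where q: "pp q" and qmax: "\<And>q'. pp q' \<Longrightarrow> length q' \<le> length q"
    using Lattices_Big.ex_has_greatest_nat[of pp "[]" length, OF p0 bnd] by blast
  define r where "r = v # u # q"
  define z where "z = last r"
  define n where "n = length r"
  have n2: "n \<ge> 2" unfolding n_def r_def by simp
  have rd: "distinct r" and rs: "successively adj r" using q unfolding pp_def r_def by auto
  have rp: "is_path adj r v z" unfolding is_path_def z_def r_def using rd rs r_def by simp
  have zn: "z = r ! (n - 1)" unfolding z_def n_def r_def by (simp add: last_conv_nth)
  have pz: "adj (r ! (n - 2)) z"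
  proof -
    have "Suc (n-2) < length r" using n2 n_def by simp
    then have "adj (r!(n-2)) (r!Suc(n-2))" by (rule successively_nth[OF rs])
    moreover have "Suc (n-2) = n-1" using n2 by simp
    ultimately show ?thesis using zn by simp
  qed
  have zV: "z \<in> V" using tree_adjV[OF T pz] by simp
  have A: "y \<in> set r" if zy: "adj z y" for y
  proof (rule ccontr)
    assume yn: "y \<notin> set r"
    have s1: "successively adj (r @ [y])" unfolding successively_append_iff
      using rs zy unfolding z_def by simp
    have s2: "distinct (r @ [y])" using rd yn by simp
    have "pp (q @ [y])" unfolding pp_def using s1 s2 by (simp add: r_def)
    then have "length (q @ [y]) \<le> length q" by (rule qmax)
    then show False by simp
  qed
  have B: "y = r ! (n - 2)" if zy: "adj z y" for y
  proof -
    obtain k where k: "k < n" "r ! k = y" using A[OF zy] unfolding n_def by (auto simp: in_set_conv_nth)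
    have yV: "y \<in> V" using tree_adjV[OF T zy] by simp
    have dk: "is_path adj (drop k r) y z" using path_drop[OF rp, of k] k unfolding n_def by simp
    have "y \<noteq> z" using zy tree_irr[OF T] by auto
    then have "is_path adj [y, z] y z" unfolding is_path_def using tree_sym[OF T zy] by simp
    then have "drop k r = [y, z]" using geod_eq[OF T yV zV dk] geod_eq[OF T yV zV] by simp
    then have "length (drop k r) = 2" by simp
    then have "n - k = 2" by (simp add: n_def)
    then have "k = n - 2" using k(1) by simp
    then show ?thesis using k by simp
  qed
  have "nbrs adj z = {r ! (n - 2)}"
  proof (rule set_eqI)
    fix y
    have "adj z y \<longleftrightarrow> y = r ! (n - 2)" using B[of y] tree_sym[OF T pz] by blast
    then show "y \<in> nbrs adj z \<longleftrightarrow> y \<in> {r ! (n - 2)}" by (simp add: nbrs_def)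
  qed
  then have leaf: "is_leaf V adj z" using zV unfolding is_leaf_def valency_def by simp
  have gz: "geod adj v z = r" by (rule geod_eq[OF T vV zV rp])
  have zv: "z \<noteq> v"
  proof
    assume "z = v"
    then have "r ! (n - 1) = r ! 0" using zn by (simp add: r_def)
    moreover have "n - 1 < length r" "0 < length r" "n - 1 \<noteq> 0" using n2 n_def by auto
    ultimately show False using nth_eq_iff_index_eq[OF rd, of "n - 1" 0] by simp
  qed
  have "hd (tl (geod adj v z)) = u" unfolding gz by (simp add: r_def)
  then show ?thesis using leaf zv by blast
qed



lemma ell_pos:
  assumes "\<And>w x. is_node V adj w \<Longrightarrow> adj w x \<Longrightarrow> d w x > 0"
  shows "ell V adj d u l > 0"
  unfolding ell_def by (intro prod_pos) (use assms in auto)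

lemma geod_edge:
  assumes T: "is_tree V adj" and uv: "adj u v"
  shows "geod adj u v = [u, v]"
proof -
  have "u \<noteq> v" using uv tree_irr[OF T] by auto
  then have "is_path adj [u, v] u v" unfolding is_path_def using uv by simp
  then show ?thesis using geod_eq[OF T] tree_adjV[OF T uv] by blast
qed

lemma ell_edge:
  fixes V :: "('a::finite) set"
  assumes T: "is_tree V adj" and uv: "adj u v" and un: "is_node V adj u" and vn: "is_node V adj v"
  shows "ell V adj d u v = (\<Prod>x\<in>{x. adj u x \<and> x \<noteq> v}. d u x) * (\<Prod>x\<in>{x. adj v x \<and> x \<noteq> u}. d v x)"
proof -
  have ne: "u \<noteq> v" using uv tree_irr[OF T] by auto
  have s: "{w \<in> set (geod adj u v). is_node V adj w} = {u, v}" using geod_edge[OF T uv] un vn by auto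
  have a: "{x. adj u x \<and> x \<notin> set (geod adj u v)} = {x. adj u x \<and> x \<noteq> v}"
    using geod_edge[OF T uv] tree_irr[OF T, of u] by auto
  have b: "{x. adj v x \<and> x \<notin> set (geod adj u v)} = {x. adj v x \<and> x \<noteq> u}"
    using geod_edge[OF T uv] tree_irr[OF T, of v] by auto
  show ?thesis unfolding ell_def s using ne a b by simp
qed

theorem proposition5p7:
  fixes V :: "('a::finite) set" and adj :: "'a \<Rightarrow> 'a \<Rightarrow> bool" and d :: "'a \<Rightarrow> 'a \<Rightarrow> nat"
    and v :: 'a
  assumes "splice_diagram V adj d"
    and "edge_determinant_condition V adj d"
    and "is_node V adj v"
  shows "inj_on (rho V adj d) (nbrs adj v) \<and> independent (rho V adj d ` nbrs adj v)
    \<and> rho V adj d v \<in> rel_interior (convex hull (rho V adj d ` nbrs adj v))"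
proof -
  have T: "is_tree V adj" and dpos: "\<And>w x. is_node V adj w \<Longrightarrow> adj w x \<Longrightarrow> d w x > 0"
    and ex3: "\<exists>v\<in>V. valency adj v \<ge> 3"
    using assms(1) unfolding splice_diagram_def by auto
  have edc: "\<And>u w. adj u w \<Longrightarrow> is_node V adj u \<Longrightarrow> is_node V adj w \<Longrightarrow> d u w * d w u > ell V adj d u w"
    using assms(2) unfolding edge_determinant_condition_def by blast
  have vV: "v \<in> V" and vnl: "\<not> is_leaf V adj v" using assms(3) unfolding is_node_def is_leaf_def by auto
  define N where "N = nbrs adj v"
  have NE: "N \<noteq> {}"
  proof -
    obtain v' where v': "v' \<in> V" "valency adj v' \<ge> 3" using ex3 by blast
    show ?thesis
    proof (cases "v' = v")
      case True
      then have "card N \<ge> 3" using v' by (simp add: N_def valency_def)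
      then show ?thesis by auto
    next
      case False
      then have "adj v (hd (tl (geod adj v v')))" using branch_a[OF T vV v'(1)] by auto
      then show ?thesis by (auto simp: N_def nbrs_def)
    qed
  qed
  define c where "c = (\<lambda>l. hd (tl (geod adj v l)))"
  define A where "A = (\<lambda>u. \<Prod>x\<in>{x. adj v x \<and> x \<noteq> u}. d v x)"
  define B where "B = (\<lambda>u. \<Prod>x\<in>{x. adj u x \<and> x \<noteq> v}. d u x)"
  define e where "e = (\<lambda>l. real (ell V adj d v l))"
  define al where "al = (\<lambda>u. if is_leaf V adj u then 1 / real (A u) else real (d u v) / real (A u))"
  define be where "be = (\<lambda>u. if is_leaf V adj u then 0 else real (B u) / real (d v u))"
  have leafV: "l \<in> V" "l \<noteq> v" if "is_leaf V adj l" for l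
    using that vnl unfolding is_leaf_def by auto
  have Apos: "A u > 0" for u unfolding A_def by (rule prod_pos) (use dpos assms(3) in auto)
  have epos: "e l > 0" for l unfolding e_def using ell_pos[of V adj d] dpos by simp
  have nodeN: "is_node V adj u" if "u \<in> N" "\<not> is_leaf V adj u" for u
    using that tree_adjV[OF T] unfolding N_def nbrs_def is_node_def is_leaf_def by auto
  have cN: "c l \<in> N" if "is_leaf V adj l" for l
    using branch_a[OF T vV leafV[OF that]] by (simp add: c_def N_def nbrs_def)
  have br: "\<exists>l. is_leaf V adj l \<and> c l = u" if "u \<in> N" for u
    using leaf_exists[OF T vV, of u] that by (auto simp: c_def N_def nbrs_def)
  have ab: "be u \<ge> 0 \<and> al u > be u" if uN: "u \<in> N" for u
  proof (cases "is_leaf V adj u")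
    case True then show ?thesis using Apos[of u] by (simp add: al_def be_def)
  next
    case False
    have un: "is_node V adj u" by (rule nodeN[OF uN False])
    have uv: "adj u v" "adj v u" using uN tree_sym[OF T] by (auto simp: N_def nbrs_def)
    have "d u v * d v u > B u * A u"
      using edc[OF uv(1) un assms(3)] ell_edge[OF T uv(1) un assms(3)] by (simp add: A_def B_def)
    then have "real (d u v) * real (d v u) > real (B u) * real (A u)"
      by (metis of_nat_less_iff of_nat_mult)
    moreover have "d v u > 0" by (rule dpos[OF assms(3) uv(2)])
    ultimately show ?thesis using Apos[of u] False
      by (simp add: al_def be_def field_simps mult.commute)
  qed
  have f: "wvec V adj d u $ l = (if is_leaf V adj l then (if c l = u then al u else be u) * e l else 0)"
    if uN: "u \<in> N" for u l
  proof (cases "is_leaf V adj l")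
    case False then show ?thesis by (simp add: wvec_def)
  next
    case lleaf: True
    note lV = leafV[OF lleaf]
    have uv: "adj v u" using uN by (simp add: N_def nbrs_def)
    have uV: "u \<in> V" using tree_adjV[OF T uv] by simp
    show ?thesis
    proof (cases "is_leaf V adj u")
      case uleaf: True
      have unn: "\<not> is_node V adj u" using uleaf unfolding is_leaf_def is_node_def by simp
      show ?thesis
      proof (cases "c l = u")
        case True
        have lu: "l = u" by (rule leaf_branch[OF T vV lV uleaf True[symmetric, unfolded c_def]])
        have "ell V adj d v l = A u * ell V adj d u l"
          using branch_in[OF T vV lV, of u d] True unn assms(3) by (simp add: c_def A_def)
        then have "ell V adj d v u = A u" using ell_self_nonnode[OF T uV unn] lu by simp
        then show ?thesis using lleaf uleaf True lu Apos[of u] by (simp add: wvec_def al_def e_def)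
      next
        case False
        have "c u = u" using geod_edge[OF T uv] by (simp add: c_def)
        then have "l \<noteq> u" using False by auto
        then show ?thesis using lleaf uleaf False by (simp add: wvec_def be_def)
      qed
    next
      case unl: False
      have un: "is_node V adj u" by (rule nodeN[OF uN unl])
      show ?thesis
      proof (cases "c l = u")
        case True
        have "d u v * ell V adj d v l = A u * ell V adj d u l"
          using branch_in[OF T vV lV, of u d] True un assms(3) by (simp add: c_def A_def)
        then have "real (d u v) * real (ell V adj d v l) = real (A u) * real (ell V adj d u l)"
          by (metis of_nat_mult)
        then show ?thesis using lleaf unl True Apos[of u]
          by (simp add: wvec_def al_def e_def field_simps)
      next
        case False
        have "d v u * ell V adj d u l = B u * ell V adj d v l"
          using branch_out(3)[OF T vV lV uv, of d] False un assms(3) by (simp add: c_def B_def)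
        then have "real (d v u) * real (ell V adj d u l) = real (B u) * real (ell V adj d v l)"
          by (metis of_nat_mult)
        moreover have "d v u > 0" by (rule dpos[OF assms(3) uv])
        ultimately show ?thesis using lleaf unl False
          by (simp add: wvec_def be_def e_def field_simps)
      qed
    qed
  qed
  have W: "wvec V adj d v $ l = (if is_leaf V adj l then e l else 0)" for l
    using vnl by (simp add: wvec_def e_def)
  have h: "rho V adj d u = inverse (norm1 (wvec V adj d u)) *\<^sub>R wvec V adj d u" for u
    by (simp add: rho_def)
  show ?thesis
    using LA_main[where N = N and f = "wvec V adj d" and L = "is_leaf V adj" and c = c and al = al
        and be = be and e = e and W = "wvec V adj d v" and h = "rho V adj d" and hv = "rho V adj d v",
        OF _ NE f W cN br epos ab h h]
    by (simp add: N_def)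
qed


end
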